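(* Let $\mathcal{A}\in\mathbb{R}^{n_1\times n_2\times n_3}$, let $q\in\mathbb{N}$, and let $\mathcal{B}\in\mathbb{R}^{n_2\times s\times n_3}$. Let $\mathcal{Q}\in\mathbb{R}^{n_1\times m\times n_3}$, with $\mathcal{Q}^\top*\mathcal{Q}=\mathcal{I}$, be an orthonormal basis (the T-QR orthonormal factor) of $$\mathcal{K}=[\mathcal{A}*\mathcal{B},\ (\mathcal{A}*\mathcal{A}^\top)*\mathcal{A}*\mathcal{B},\ldots,(\mathcal{A}*\mathcal{A}^\top)^q*\mathcal{A}*\mathcal{B}].$$ Let $\mathcal{C}=\mathcal{Q}^\top*\mathcal{A}$, let $\mathcal{C}=\mathcal{U}_C*\mathcal{S}_C*\mathcal{V}_C^\top$ be its T-SVD, and let $\widehat{\mathcal{U}}=\mathcal{Q}*\mathcal{U}_C$. For $k\le m$ let $\widehat{\mathcal{U}}_k=\widehat{\mathcal{U}}(:,1:k,:)$ be its first $k$ lateral slices. Then $$\|\mathcal{A}-\widehat{\mathcal{U}}_k*\widehat{\mathcal{U}}_k^\top*\mathcal{A}\|_F^2\le \|\mathcal{A}_k-\mathcal{Q}*\mathcal{Q}^\top*\mathcal{A}_k\|_F^2+\|\mathcal{A}_{k,\perp}\|_F^2.$$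
   Context: For a real tensor $\mathcal{X}\in\mathbb{R}^{n_1\times n_2\times n_3}$ with frontal slices $X^{(k)}$: - $\mathtt{bcirc}(\mathcal{X})$ is the $n_1n_3\times n_2n_3$ block circulant matrix with first block column $X^{(1)},\dots,X^{(n_3)}$. $\mathtt{unfold}$ stacks the frontal slices vertically and $\mathtt{fold}$ inverts it. - The T-product is $\mathcal{X}*\mathcal{Y}=\mathtt{fold}(\mathtt{bcirc}(\mathcal{X})\mathtt{unfold}(\mathcal{Y}))$. - The transpose $\mathcal{X}^\top$ has slices $(X^{(1)})^\top$ and $\mathcal{X}^\top(:,:,k)=(X^{(n_3+2-k)})^\top$ for $k\ge 2$. - $\mathcal{I}$ is the identity tensor (first frontal slice an identity matrix, others zero). Orthogonal tensors $\mathcal{U}$ satisfy $\mathcal{U}^\top*\mathcal{U}=\mathcal{U}*\mathcal{U}^\top=\mathcal{I}$. Powers are repeated T-products. - $[\cdot,\ldots,\cdot]$ is concatenation along the second mode. - $\|\mathcal{X}\|_F$ is the square root of the sum of squared entries. - The T-SVD $\mathcal{X}=\mathcal{U}*\mathcal{S}*\mathcal{V}^\top$ (with $\mathcal{U},\mathcal{V}$ orthogonal and $\mathcal{S}$ f-diagonal, i.e. every frontal slice diagonal) is computed by applying the DFT along the third mode, taking an SVD of each frontal slice with singular values in nonincreasing order, and transforming back. - For $\mathcal{A}=\mathcal{U}*\mathcal{S}*\mathcal{V}^\top$ the tubal-rank-$k$ truncation is $\mathcal{A}_k=\mathcal{U}(:,1:k,:)*\mathcal{S}(1:k,1:k,:)*\mathcal{V}(:,1:k,:)^\top$,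 and $\mathcal{A}_{k,\perp}=\mathcal{A}-\mathcal{A}_k=\mathcal{U}(:,k+1:n_1,:)*\mathcal{S}(k+1:n_1,k+1:n_2,:)*\mathcal{V}(:,k+1:n_2,:)^\top$. *)

theory Defs
  imports Complex_Main
begin

text \<open>Third-order real tensors are represented as functions
  nat => nat => nat => real, indexed from 0, together with explicit
  dimensions n1 x n2 x n3.  Operations return 0 outside the index range.\<close>

type_synonym tensor = "nat \<Rightarrow> nat \<Rightarrow> nat \<Rightarrow> real"

definition is_tensor :: "nat \<Rightarrow> nat \<Rightarrow> nat \<Rightarrow> tensor \<Rightarrow> bool" where
  "is_tensor n1 n2 n3 X \<longleftrightarrow>
     (\<forall>i j k. \<not> (i < n1 \<and> j < n2 \<and> k < n3) \<longrightarrow> X i j k = 0)"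

text \<open>T-product of X (n1 x n2 x n3) and Y (n2 x l x n3):
  fold (bcirc X * unfold Y); frontal slice k is sum over t of X^((k-t) mod n3) Y^(t).\<close>
definition tprod :: "nat \<Rightarrow> nat \<Rightarrow> nat \<Rightarrow> nat \<Rightarrow> tensor \<Rightarrow> tensor \<Rightarrow> tensor" where
  "tprod n1 n2 n3 l X Y = (\<lambda>i j k.
     if i < n1 \<and> j < l \<and> k < n3
     then (\<Sum>p<n2. \<Sum>t<n3. X i p ((k + n3 - t) mod n3) * Y p j t)
     else 0)"

definition ttrans :: "nat \<Rightarrow> nat \<Rightarrow> nat \<Rightarrow> tensor \<Rightarrow> tensor" where
  "ttrans n1 n2 n3 X = (\<lambda>i j k.
     if i < n2 \<and> j < n1 \<and> k < n3 then X j i ((n3 - k) mod n3) else 0)"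

definition tid :: "nat \<Rightarrow> nat \<Rightarrow> tensor" where
  "tid n n3 = (\<lambda>i j k. if i < n \<and> j < n \<and> k = 0 \<and> 0 < n3 \<and> i = j then 1 else 0)"

definition tminus :: "tensor \<Rightarrow> tensor \<Rightarrow> tensor" where
  "tminus X Y = (\<lambda>i j k. X i j k - Y i j k)"

primrec tpow :: "nat \<Rightarrow> nat \<Rightarrow> tensor \<Rightarrow> nat \<Rightarrow> tensor" where
  "tpow n n3 X 0 = tid n n3"
| "tpow n n3 X (Suc b) = tprod n n n3 n X (tpow n n3 X b)"

definition orthogonal_tensor :: "nat \<Rightarrow> nat \<Rightarrow> tensor \<Rightarrow> bool" where
  "orthogonal_tensor n n3 U \<longleftrightarrow>
     tprod n n n3 n (ttrans n n n3 U) U = tid n n3 \<and>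
     tprod n n n3 n U (ttrans n n n3 U) = tid n n3"

definition f_diagonal :: "tensor \<Rightarrow> bool" where
  "f_diagonal S \<longleftrightarrow> (\<forall>i j k. i \<noteq> j \<longrightarrow> S i j k = 0)"

definition f_upper_triangular :: "tensor \<Rightarrow> bool" where
  "f_upper_triangular R \<longleftrightarrow> (\<forall>i j k. j < i \<longrightarrow> R i j k = 0)"

definition tfro :: "nat \<Rightarrow> nat \<Rightarrow> nat \<Rightarrow> tensor \<Rightarrow> real" where
  "tfro n1 n2 n3 X = sqrt (\<Sum>i<n1. \<Sum>j<n2. \<Sum>k<n3. (X i j k)\<^sup>2)"

definition tdft :: "nat \<Rightarrow> tensor \<Rightarrow> nat \<Rightarrow> nat \<Rightarrow> nat \<Rightarrow> complex" where
  "tdft n3 X i j f = (\<Sum>t<n3. complex_of_real (X i j t) * cis (- 2 * pi * real f * real t / real n3))"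

text \<open>T-SVD X = U * S * V^T of X (n1 x n2 x n3): U, V orthogonal, S f-diagonal, and
  in the Fourier domain each frontal slice of S carries the singular values of the
  corresponding slice, i.e. its diagonal is real, nonnegative and nonincreasing.\<close>
definition is_tsvd :: "nat \<Rightarrow> nat \<Rightarrow> nat \<Rightarrow> tensor \<Rightarrow> tensor \<Rightarrow> tensor \<Rightarrow> tensor \<Rightarrow> bool" where
  "is_tsvd n1 n2 n3 X U S V \<longleftrightarrow>
     is_tensor n1 n1 n3 U \<and> is_tensor n1 n2 n3 S \<and> is_tensor n2 n2 n3 V \<and>
     orthogonal_tensor n1 n3 U \<and> orthogonal_tensor n2 n3 V \<and> f_diagonal S \<and>
     X = tprod n1 n2 n3 n2 (tprod n1 n1 n3 n2 U S) (ttrans n2 n2 n3 V) \<and>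
     (\<forall>f<n3. \<forall>i<min n1 n2.
        Im (tdft n3 S i i f) = 0 \<and> 0 \<le> Re (tdft n3 S i i f) \<and>
        (Suc i < min n1 n2 \<longrightarrow> Re (tdft n3 S (Suc i) (Suc i) f) \<le> Re (tdft n3 S i i f)))"

definition tlat_take :: "nat \<Rightarrow> tensor \<Rightarrow> tensor" where
  "tlat_take k X = (\<lambda>i j t. if j < k then X i j t else 0)"

definition tlead :: "nat \<Rightarrow> tensor \<Rightarrow> tensor" where
  "tlead k X = (\<lambda>i j t. if i < k \<and> j < k then X i j t else 0)"

definition ttrunc :: "nat \<Rightarrow> nat \<Rightarrow> nat \<Rightarrow> nat \<Rightarrow> tensor \<Rightarrow> tensor \<Rightarrow> tensor \<Rightarrow> tensor" where
  "ttrunc n1 n2 n3 k U S V =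
     tprod n1 k n3 n2 (tprod n1 k n3 k (tlat_take k U) (tlead k S))
       (ttrans n2 k n3 (tlat_take k V))"

definition tcat :: "nat \<Rightarrow> nat \<Rightarrow> nat \<Rightarrow> nat \<Rightarrow> (nat \<Rightarrow> tensor) \<Rightarrow> tensor" where
  "tcat n1 s n3 nb F = (\<lambda>i j k.
     if i < n1 \<and> j < nb * s \<and> k < n3 then F (j div s) i (j mod s) k else 0)"

definition krylov :: "nat \<Rightarrow> nat \<Rightarrow> nat \<Rightarrow> nat \<Rightarrow> nat \<Rightarrow> tensor \<Rightarrow> tensor \<Rightarrow> tensor" where
  "krylov n1 n2 n3 s q A B =
     tcat n1 s n3 (Suc q) (\<lambda>b.
        tprod n1 n1 n3 s (tpow n1 n3 (tprod n1 n2 n3 n1 A (ttrans n1 n2 n3 A)) b)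
                         (tprod n1 n2 n3 s A B))"

definition is_tqr_factor :: "nat \<Rightarrow> nat \<Rightarrow> nat \<Rightarrow> nat \<Rightarrow> tensor \<Rightarrow> tensor \<Rightarrow> bool" where
  "is_tqr_factor n1 l n3 m K Q \<longleftrightarrow>
     is_tensor n1 m n3 Q \<and>
     tprod m n1 n3 m (ttrans n1 m n3 Q) Q = tid m n3 \<and>
     (\<exists>R. is_tensor m l n3 R \<and> f_upper_triangular R \<and> K = tprod n1 m n3 l Q R)"

end

theory Submission
  imports Defs
begin


type_synonym cmat = "nat \<Rightarrow> nat \<Rightarrow> complex"

definition cm :: "nat \<Rightarrow> nat \<Rightarrow> cmat \<Rightarrow> bool" where
  "cm r c a \<longleftrightarrow> (\<forall>i j. \<not> (i < r \<and> j < c) \<longrightarrow> a i j = 0)"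

definition mm :: "nat \<Rightarrow> nat \<Rightarrow> nat \<Rightarrow> cmat \<Rightarrow> cmat \<Rightarrow> cmat" where
  "mm r p c a b = (\<lambda>i j. if i < r \<and> j < c then (\<Sum>x<p. a i x * b x j) else 0)"

definition ad :: "nat \<Rightarrow> nat \<Rightarrow> cmat \<Rightarrow> cmat" where
  "ad r c a = (\<lambda>i j. if i < r \<and> j < c then cnj (a j i) else 0)"

definition idm :: "nat \<Rightarrow> cmat" where
  "idm n = (\<lambda>i j. if i < n \<and> j < n \<and> i = j then 1 else 0)"

definition msub :: "cmat \<Rightarrow> cmat \<Rightarrow> cmat" where
  "msub a b = (\<lambda>i j. a i j - b i j)"

definition ip :: "nat \<Rightarrow> nat \<Rightarrow> cmat \<Rightarrow> cmat \<Rightarrow> complex" where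
  "ip r c a b = (\<Sum>i<r. \<Sum>j<c. cnj (a i j) * b i j)"

definition fro :: "nat \<Rightarrow> nat \<Rightarrow> cmat \<Rightarrow> real" where
  "fro r c a = (\<Sum>i<r. \<Sum>j<c. (cmod (a i j))\<^sup>2)"

lemma cm_mm[simp]: "cm r c (mm r p c a b)" by (simp add: cm_def mm_def)
lemma cm_ad[simp]: "cm r c (ad r c a)" by (simp add: cm_def ad_def)
lemma cm_idm[simp]: "cm n n (idm n)" by (simp add: cm_def idm_def)

lemma mm_assoc: "mm r p c (mm r q p a b) d = mm r q c a (mm q p c b d)"
proof -
  have "(\<Sum>x<p. (\<Sum>y<q. a i y * b y x) * d x j) = (\<Sum>y<q. a i y * (\<Sum>x<p. b y x * d x j))" for i j
    by (simp add: sum_distrib_left sum_distrib_right mult.assoc sum.swap[of _ "{..<p}"])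
  then show ?thesis by (auto simp: mm_def fun_eq_iff intro!: sum.cong)
qed

lemma ad_mm: "ad c r (mm r p c a b) = mm c p r (ad c p b) (ad p r a)"
  by (auto simp: ad_def mm_def fun_eq_iff mult.commute intro!: sum.cong)

lemma ad_ad: "cm r c a \<Longrightarrow> ad r c (ad c r a) = a"
  by (auto simp: ad_def cm_def fun_eq_iff)

lemma mm_idm_left: "cm r c b \<Longrightarrow> mm r r c (idm r) b = b"
proof -
  assume h: "cm r c b"
  have "(\<Sum>x<r. (if i < r \<and> x < r \<and> i = x then 1 else 0) * b x j) = b i j" if "i < r" for i j
  proof -
    have "(\<Sum>x<r. (if i < r \<and> x < r \<and> i = x then 1 else 0) * b x j) = (\<Sum>x<r. if i = x then b x j else 0)"
      by (rule sum.cong) (auto simp: that)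
    also have "\<dots> = b i j" using that by (simp add: sum.delta)
    finally show ?thesis .
  qed
  then show ?thesis using h by (auto simp: mm_def idm_def cm_def fun_eq_iff)
qed

lemma mm_idm_right: "cm r c b \<Longrightarrow> mm r c c b (idm c) = b"
proof -
  assume h: "cm r c b"
  have "(\<Sum>x<c. b i x * (if x < c \<and> j < c \<and> x = j then 1 else 0)) = b i j" if "j < c" for i j
  proof -
    have "(\<Sum>x<c. b i x * (if x < c \<and> j < c \<and> x = j then 1 else 0)) = (\<Sum>x<c. if x = j then b i x else 0)"
      by (rule sum.cong) (auto simp: that)
    also have "\<dots> = b i j" using that by (simp add: sum.delta')
    finally show ?thesis .
  qed
  then show ?thesis using h by (auto simp: mm_def idm_def cm_def fun_eq_iff)
qed

lemma fro_ip: "complex_of_real (fro r c a) = ip r c a a"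
  by (simp add: fro_def ip_def mult.commute of_real_sum complex_norm_square[symmetric])

lemma fro_ip': "fro r c a = Re (ip r c a a)"
  by (metis Re_complex_of_real fro_ip)

lemma ip_cnj: "ip r c b a = cnj (ip r c a b)"
  by (simp add: ip_def mult.commute)

lemma ip_mm_left: "ip r c (mm r p c u x) y = ip p c x (mm p r c (ad p r u) y)"
proof -
  have "(\<Sum>i<r. \<Sum>j<c. cnj (\<Sum>z<p. u i z * x z j) * y i j)
      = (\<Sum>z<p. \<Sum>j<c. cnj (x z j) * (\<Sum>i<r. cnj (u i z) * y i j))"
  proof -
    have "(\<Sum>i<r. \<Sum>j<c. cnj (\<Sum>z<p. u i z * x z j) * y i j)
       = (\<Sum>i<r. \<Sum>j<c. \<Sum>z<p. cnj (x z j) * (cnj (u i z) * y i j))"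
      by (simp add: sum_distrib_right sum_distrib_left mult_ac)
    also have "\<dots> = (\<Sum>j<c. \<Sum>i<r. \<Sum>z<p. cnj (x z j) * (cnj (u i z) * y i j))"
      by (rule sum.swap)
    also have "\<dots> = (\<Sum>j<c. \<Sum>z<p. \<Sum>i<r. cnj (x z j) * (cnj (u i z) * y i j))"
      by (rule sum.cong, simp, rule sum.swap)
    also have "\<dots> = (\<Sum>z<p. \<Sum>j<c. \<Sum>i<r. cnj (x z j) * (cnj (u i z) * y i j))"
      by (rule sum.swap)
    also have "\<dots> = (\<Sum>z<p. \<Sum>j<c. cnj (x z j) * (\<Sum>i<r. cnj (u i z) * y i j))"
      by (simp add: sum_distrib_left)
    finally show ?thesis .
  qed
  then show ?thesis by (simp add: ip_def mm_def ad_def)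
qed

lemma ip_mm_right: "ip r c (mm r p c x v) y = ip r p x (mm r c p y (ad c p v))"
proof -
  have "(\<Sum>i<r. \<Sum>j<c. cnj (\<Sum>z<p. x i z * v z j) * y i j)
      = (\<Sum>i<r. \<Sum>z<p. cnj (x i z) * (\<Sum>j<c. y i j * cnj (v z j)))"
    apply (rule sum.cong, simp)
    apply (simp add: sum_distrib_left sum_distrib_right)
    apply (subst sum.swap) apply (rule sum.cong, simp)
    apply (rule sum.cong, simp)
    apply (simp add: mult_ac)
    done
  then show ?thesis by (simp add: ip_def mm_def ad_def)
qed

lemma ip_msub_left: "ip r c (msub a b) d = ip r c a d - ip r c b d"
  by (simp add: ip_def msub_def algebra_simps sum_subtractf)
lemma ip_msub_right: "ip r c d (msub a b) = ip r c d a - ip r c d b"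
  by (simp add: ip_def msub_def algebra_simps sum_subtractf)

lemma fro_msub: "fro r c (msub a b) = fro r c a - 2 * Re (ip r c a b) + fro r c b"
proof -
  have "Re (ip r c b a) = Re (ip r c a b)" by (subst ip_cnj) simp
  then show ?thesis by (simp add: fro_ip' ip_msub_left ip_msub_right)
qed



lemma cm_eqI: "cm r c x \<Longrightarrow> cm r c y \<Longrightarrow> (\<And>i j. i < r \<Longrightarrow> j < c \<Longrightarrow> x i j = y i j) \<Longrightarrow> x = y"
  by (auto simp: cm_def fun_eq_iff) (metis)

lemma mm_apply: "i < r \<Longrightarrow> j < c \<Longrightarrow> mm r p c a b i j = (\<Sum>x<p. a i x * b x j)"
  by (simp add: mm_def)

lemma mm_cong: "(\<And>i x. i < r \<Longrightarrow> x < p \<Longrightarrow> a i x = a' i x) \<Longrightarrow> (\<And>x j. x < p \<Longrightarrow> j < c \<Longrightarrow> b x j = b' x j)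
   \<Longrightarrow> mm r p c a b = mm r p c a' b'"
  by (auto simp: mm_def fun_eq_iff intro!: sum.cong)

lemma fro_nonneg: "0 \<le> fro r c a" by (simp add: fro_def sum_nonneg)

lemma L3: assumes "mm p r p (ad p r U) U = idm p" "cm p c X"
  shows "fro r c (mm r p c U X) = fro p c X"
proof -
  have "ip r c (mm r p c U X) (mm r p c U X) = ip p c X (mm p r c (ad p r U) (mm r p c U X))"
    by (rule ip_mm_left)
  also have "mm p r c (ad p r U) (mm r p c U X) = mm p p c (mm p r p (ad p r U) U) X"
    by (simp add: mm_assoc)
  also have "\<dots> = X" using assms by (simp add: mm_idm_left)
  finally show ?thesis by (simp add: fro_ip')
qed

lemma L2: assumes "mm n c n V (ad c n V) = idm n" "cm r n X"
  shows "fro r c (mm r n c X V) = fro r n X"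
proof -
  have "ip r c (mm r n c X V) (mm r n c X V) = ip r n X (mm r c n (mm r n c X V) (ad c n V))"
    by (rule ip_mm_right)
  also have "mm r c n (mm r n c X V) (ad c n V) = mm r n n X (mm n c n V (ad c n V))"
    by (simp add: mm_assoc)
  also have "\<dots> = X" using assms by (simp add: mm_idm_right)
  finally show ?thesis by (simp add: fro_ip')
qed

lemma L4: assumes "mm k n k (ad k n U) U = idm k"
  shows "fro n c (msub A (mm n n c (mm n k n U (ad k n U)) A)) = fro n c A - fro k c (mm k n c (ad k n U) A)"
proof -
  define B where "B = mm k n c (ad k n U) A"
  have e: "mm n n c (mm n k n U (ad k n U)) A = mm n k c U B" by (simp add: B_def mm_assoc)
  have f: "fro n c (mm n k c U B) = fro k c B" using assms by (intro L3) (auto simp: B_def)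
  have "ip n c A (mm n k c U B) = cnj (ip n c (mm n k c U B) A)" by (rule ip_cnj)
  also have "ip n c (mm n k c U B) A = ip k c B B" by (simp add: ip_mm_left B_def)
  finally have g: "Re (ip n c A (mm n k c U B)) = fro k c B" by (simp add: fro_ip')
  show ?thesis unfolding e B_def[symmetric] fro_msub using f g by linarith
qed

lemma L5: assumes "ad n n P = P" "mm n n n P P = P"
  shows "fro r n (msub A (mm r n n A P)) = fro r n A - fro r n (mm r n n A P)"
proof -
  have "ip r n (mm r n n A P) (mm r n n A P) = ip r n A (mm r n n (mm r n n A P) (ad n n P))"
    by (rule ip_mm_right)
  also have "\<dots> = ip r n A (mm r n n A P)" using assms by (simp add: mm_assoc)
  finally have "Re (ip r n A (mm r n n A P)) = fro r n (mm r n n A P)" by (simp add: fro_ip')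
  then show ?thesis unfolding fro_msub by linarith
qed

lemma fro_mono_proj: assumes "ad n n P = P" "mm n n n P P = P"
  shows "fro r n (mm r n n A P) \<le> fro r n A"
  using L5[OF assms, of r A] fro_nonneg[of r n "msub A (mm r n n A P)"] by simp

lemma antimono_restr: assumes "\<And>i. Suc i < N \<Longrightarrow> s (Suc i) \<le> (s i :: real)" "i \<le> j" "j < N"
  shows "s j \<le> s i"
  using assms(2,3)
proof (induction j rule: dec_induct)
  case base then show ?case by simp
next
  case (step j) then show ?case using assms(1)[of j] by simp
qed

lemma kyfan:
  fixes s d :: "nat \<Rightarrow> real"
  assumes d01: "\<And>i. i < N \<Longrightarrow> 0 \<le> d i \<and> d i \<le> 1"
    and dsum: "(\<Sum>i<N. d i) \<le> real k"
    and smono: "\<And>i. Suc i < N \<Longrightarrow> s (Suc i) \<le> s i"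
    and spos: "\<And>i. i < N \<Longrightarrow> 0 \<le> s i"
  shows "(\<Sum>i<N. s i * d i) \<le> (\<Sum>i<min k N. s i)"
proof -
  define c where "c = (if k < N then s k else 0)"
  have c0: "0 \<le> c" using spos by (simp add: c_def)
  have tm: "(s i - c) * d i \<le> (if i < k then s i - c else 0)" if "i < N" for i
  proof (cases "i < k")
    case True
    have "c \<le> s i" using spos[OF that] antimono_restr[of N s i k, OF smono] True
      by (auto simp: c_def)
    then show ?thesis using True d01[OF that] by (simp add: mult_left_le)
  next
    case False
    then have "k < N" "s i \<le> c" using that antimono_restr[of N s k i, OF smono] by (auto simp: c_def)
    then show ?thesis using False d01[OF that] by (simp add: mult_nonpos_nonneg)
  qed
  have "(\<Sum>i<N. s i * d i) = (\<Sum>i<N. (s i - c) * d i) + c * (\<Sum>i<N. d i)"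
    by (simp add: algebra_simps sum_distrib_left sum.distrib sum_subtractf)
  also have "\<dots> \<le> (\<Sum>i<N. (if i < k then s i - c else 0)) + c * real k"
    using tm dsum c0 by (intro add_mono sum_mono mult_left_mono) auto
  also have "(\<Sum>i<N. (if i < k then s i - c else 0)) = (\<Sum>i<min k N. s i - c)"
  proof -
    have "(\<Sum>i<N. (if i < k then s i - c else 0)) = (\<Sum>i\<in>{i \<in> {..<N}. i < k}. s i - c)"
      by (rule sum.inter_filter[symmetric]) simp
    also have "{i \<in> {..<N}. i < k} = {..<min k N}" by auto
    finally show ?thesis .
  qed
  also have "(\<Sum>i<min k N. s i - c) + c * real k = (\<Sum>i<min k N. s i) + c * (real k - real (min k N))"
    by (simp add: sum_subtractf algebra_simps)
  also have "c * (real k - real (min k N)) = 0" by (auto simp: c_def min_def)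
  finally show ?thesis by simp
qed



definition takec :: "nat \<Rightarrow> cmat \<Rightarrow> cmat" where
  "takec k x = (\<lambda>i j. if j < k then x i j else 0)"
definition leadm :: "nat \<Rightarrow> cmat \<Rightarrow> cmat" where
  "leadm k x = (\<lambda>i j. if i < k \<and> j < k then x i j else 0)"
definition rowm :: "nat \<Rightarrow> cmat \<Rightarrow> cmat" where
  "rowm i x = (\<lambda>a j. if a = 0 then x i j else 0)"

lemma cmod_sq_cnj: "complex_of_real ((cmod z)\<^sup>2) = cnj z * z"
  by (metis complex_norm_square mult.commute norm_complex_def)

lemma col_norm:
  assumes "mm n n n (ad n n v) v = idm n" "i < n"
  shows "(\<Sum>j<n. (cmod (v j i))\<^sup>2) = 1"
proof -
  have "mm n n n (ad n n v) v i i = 1" using assms by (simp add: idm_def)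
  then have "(\<Sum>j<n. cnj (v j i) * v j i) = 1" using assms(2) by (simp add: mm_def ad_def)
  then have "complex_of_real (\<Sum>j<n. (cmod (v j i))\<^sup>2) = 1" by (simp only: of_real_sum cmod_sq_cnj)
  then show ?thesis by (metis of_real_1 of_real_eq_iff)
qed

lemma diag_row_sum:
  fixes sc y :: cmat
  assumes "\<And>i j. i \<noteq> j \<Longrightarrow> sc i j = 0"
  shows "(\<Sum>x<n. sc i x * y x j) = (if i < n then sc i i * y i j else 0)"
proof -
  have "(\<Sum>x<n. sc i x * y x j) = (\<Sum>x<n. if i = x then sc i x * y x j else 0)"
    by (rule sum.cong) (auto simp: assms)
  then show ?thesis by (simp add: sum.delta)
qed

lemma diag_col_sum:
  fixes sc y :: cmat
  assumes "\<And>i j. i \<noteq> j \<Longrightarrow> sc i j = 0"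
  shows "(\<Sum>x<n. y i x * sc x j) = (if j < n then y i j * sc j j else 0)"
proof -
  have "(\<Sum>x<n. y i x * sc x j) = (\<Sum>x<n. if x = j then y i x * sc x j else 0)"
    by (rule sum.cong) (auto simp: assms)
  then show ?thesis by (simp add: sum.delta')
qed



lemma matrix_main:
  fixes n1 n2 m k :: nat and a q ua sa va uc sc vc :: cmat
  assumes ca: "cm n1 n2 a" and cq: "cm n1 m q" and qq: "mm m n1 m (ad m n1 q) q = idm m"
    and cua: "cm n1 n1 ua" and csa: "cm n1 n2 sa" and cva: "cm n2 n2 va"
    and vava: "mm n2 n2 n2 (ad n2 n2 va) va = idm n2"
    and dsa: "\<And>i j. i \<noteq> j \<Longrightarrow> sa i j = 0"
    and asvd: "a = mm n1 n2 n2 (mm n1 n1 n2 ua sa) (ad n2 n2 va)"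
    and cuc: "cm m m uc" and csc: "cm m n2 sc" and cvc: "cm n2 n2 vc"
    and ucuc: "mm m m m (ad m m uc) uc = idm m"
    and vcvc: "mm n2 n2 n2 (ad n2 n2 vc) vc = idm n2"
    and vcvc2: "mm n2 n2 n2 vc (ad n2 n2 vc) = idm n2"
    and dsc: "\<And>i j. i \<noteq> j \<Longrightarrow> sc i j = 0"
    and csvd: "mm m n1 n2 (ad m n1 q) a = mm m n2 n2 (mm m m n2 uc sc) (ad n2 n2 vc)"
    and ord: "\<And>i. i < min m n2 \<Longrightarrow> Im (sc i i) = 0 \<and> 0 \<le> Re (sc i i) \<and>
                 (Suc i < min m n2 \<longrightarrow> Re (sc (Suc i) (Suc i)) \<le> Re (sc i i))"
    and hk: "k \<le> m"
  shows "fro n1 n2 (msub a (mm n1 n1 n2 (mm n1 k n1 (takec k (mm n1 m m q uc))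
            (ad k n1 (takec k (mm n1 m m q uc)))) a))
     \<le> fro n1 n2 (msub (mm n1 k n2 (mm n1 k k (takec k ua) (leadm k sa)) (ad k n2 (takec k va)))
            (mm n1 n1 n2 (mm n1 m n1 q (ad m n1 q))
               (mm n1 k n2 (mm n1 k k (takec k ua) (leadm k sa)) (ad k n2 (takec k va)))))
       + fro n1 n2 (msub a (mm n1 k n2 (mm n1 k k (takec k ua) (leadm k sa)) (ad k n2 (takec k va))))"
proof -
  define uh where "uh = mm n1 m m q uc"
  define uk where "uk = takec k uh"
  define vk where "vk = takec k va"
  define ak where "ak = mm n1 k n2 (mm n1 k k (takec k ua) (leadm k sa)) (ad k n2 vk)"
  define Cc where "Cc = mm m n1 n2 (ad m n1 q) a"
  define s where "s = (\<lambda>i. (cmod (sc i i))\<^sup>2)"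
  have uhuh: "mm m n1 m (ad m n1 uh) uh = idm m"
  proof -
    have "mm m n1 m (ad m n1 uh) uh = mm m n1 m (mm m m n1 (ad m m uc) (ad m n1 q)) (mm n1 m m q uc)"
      by (simp add: uh_def ad_mm)
    also have "\<dots> = mm m m m (ad m m uc) (mm m m m (mm m n1 m (ad m n1 q) q) uc)"
      by (simp add: mm_assoc)
    also have "\<dots> = idm m" using cuc by (simp add: qq mm_idm_left ucuc)
    finally show ?thesis .
  qed
  have ukuk: "mm k n1 k (ad k n1 uk) uk = idm k"
  proof (rule cm_eqI[of k k])
    fix i j assume ij: "i < k" "j < k"
    have "mm k n1 k (ad k n1 uk) uk i j = mm m n1 m (ad m n1 uh) uh i j"
      using ij hk by (simp add: mm_def ad_def uk_def takec_def)
    also have "\<dots> = idm k i j" using ij hk by (simp add: uhuh idm_def)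
    finally show "mm k n1 k (ad k n1 uk) uk i j = idm k i j" .
  qed auto
  have lhs1: "fro n1 n2 (msub a (mm n1 n1 n2 (mm n1 k n1 uk (ad k n1 uk)) a))
      = fro n1 n2 a - fro k n2 (mm k n1 n2 (ad k n1 uk) a)"
    by (rule L4[OF ukuk])
  have uhC: "mm m n1 n2 (ad m n1 uh) a = mm m n2 n2 sc (ad n2 n2 vc)"
  proof -
    have "mm m n1 n2 (ad m n1 uh) a = mm m n1 n2 (mm m m n1 (ad m m uc) (ad m n1 q)) a"
      by (simp add: uh_def ad_mm)
    also have "\<dots> = mm m m n2 (ad m m uc) Cc" by (simp add: mm_assoc Cc_def)
    also have "\<dots> = mm m m n2 (ad m m uc) (mm m n2 n2 (mm m m n2 uc sc) (ad n2 n2 vc))"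
      by (simp add: Cc_def csvd)
    also have "\<dots> = mm m n2 n2 (mm m m n2 (mm m m m (ad m m uc) uc) sc) (ad n2 n2 vc)"
      by (simp add: mm_assoc)
    also have "\<dots> = mm m n2 n2 sc (ad n2 n2 vc)" using csc by (simp add: ucuc mm_idm_left)
    finally show ?thesis .
  qed
  have ukA: "mm k n1 n2 (ad k n1 uk) a = mm k n2 n2 sc (ad n2 n2 vc)"
  proof (rule cm_eqI[of k n2])
    fix i j assume ij: "i < k" "j < n2"
    have "mm k n1 n2 (ad k n1 uk) a i j = mm m n1 n2 (ad m n1 uh) a i j"
      using ij hk by (simp add: mm_def ad_def uk_def takec_def)
    also have "\<dots> = mm k n2 n2 sc (ad n2 n2 vc) i j" using ij hk unfolding uhC by (simp add: mm_def)
    finally show "mm k n1 n2 (ad k n1 uk) a i j = mm k n2 n2 sc (ad n2 n2 vc) i j" .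
  qed auto
  define sck where "sck = (\<lambda>i j. if i < k \<and> j < n2 then sc i j else 0)"
  have "mm k n2 n2 sc (ad n2 n2 vc) = mm k n2 n2 sck (ad n2 n2 vc)"
    by (rule mm_cong) (auto simp: sck_def)
  moreover have "fro k n2 (mm k n2 n2 sck (ad n2 n2 vc)) = fro k n2 sck"
  proof (rule L2)
    show "mm n2 n2 n2 (ad n2 n2 vc) (ad n2 n2 (ad n2 n2 vc)) = idm n2"
      using cvc vcvc by (simp add: ad_ad)
  qed (auto simp: cm_def sck_def)
  moreover have "fro k n2 sck = (\<Sum>i<min k n2. s i)"
  proof -
    have "fro k n2 sck = (\<Sum>i<k. if i < n2 then s i else 0)"
    proof (unfold fro_def, rule sum.cong, simp)
      fix i assume "i \<in> {..<k}"
      then have "(\<Sum>j<n2. (cmod (sck i j))\<^sup>2) = (\<Sum>j<n2. if i = j then s i else 0)"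
        by (intro sum.cong) (auto simp: sck_def s_def dsc)
      then show "(\<Sum>j<n2. (cmod (sck i j))\<^sup>2) = (if i < n2 then s i else 0)" by (simp add: sum.delta)
    qed
    also have "\<dots> = (\<Sum>i\<in>{i \<in> {..<k}. i < n2}. s i)" by (rule sum.inter_filter[symmetric]) simp
    also have "{i \<in> {..<k}. i < n2} = {..<min k n2}" by auto
    finally show ?thesis .
  qed
  ultimately have lhs: "fro n1 n2 (msub a (mm n1 n1 n2 (mm n1 k n1 uk (ad k n1 uk)) a))
      = fro n1 n2 a - (\<Sum>i<min k n2. s i)"
    using lhs1 ukA by simp
  have cvk: "cm n2 k vk" using cva by (auto simp: cm_def vk_def takec_def)
  define D where "D = mm k n2 k (ad k n2 vk) vk"
  define P where "P = mm n2 k n2 vk (ad k n2 vk)"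
  have Dv: "D = (\<lambda>i j. if i < k \<and> j < k then idm n2 i j else 0)"
  proof (rule cm_eqI[of k k])
    fix i j assume ij: "i < k" "j < k"
    have "D i j = (if i < n2 \<and> j < n2 then mm n2 n2 n2 (ad n2 n2 va) va i j else 0)"
      using ij cva by (auto simp: D_def mm_def ad_def vk_def takec_def cm_def)
    then show "D i j = (if i < k \<and> j < k then idm n2 i j else 0)" using ij by (simp add: vava idm_def)
  qed (auto simp: D_def cm_def mm_def)
  have vkD: "mm n2 k k vk D = vk"
  proof (rule cm_eqI[of n2 k])
    fix i j assume ij: "i < n2" "j < k"
    have "mm n2 k k vk D i j = (\<Sum>x<k. vk i x * (if x < n2 \<and> x = j then 1 else 0))"
      using ij by (auto simp: mm_def Dv idm_def intro!: sum.cong)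
    also have "\<dots> = (\<Sum>x<k. if x = j then (if j < n2 then vk i x else 0) else 0)"
      by (rule sum.cong) auto
    also have "\<dots> = vk i j" using ij cva by (auto simp: cm_def vk_def takec_def)
    finally show "mm n2 k k vk D i j = vk i j" .
  qed (use cvk in auto)
  have adD: "ad k k D = D" using cvk by (simp add: D_def ad_mm ad_ad)
  have Dadv: "mm k k n2 D (ad k n2 vk) = ad k n2 vk"
  proof -
    have "ad k n2 (mm n2 k k vk D) = mm k k n2 (ad k k D) (ad k n2 vk)" by (rule ad_mm)
    then show ?thesis using vkD adD by simp
  qed
  have Pherm: "ad n2 n2 P = P" using cvk by (simp add: P_def ad_mm ad_ad)
  have Pidem: "mm n2 n2 n2 P P = P"
  proof -
    have "mm n2 n2 n2 P P = mm n2 k n2 vk (mm k k n2 (mm k n2 k (ad k n2 vk) vk) (ad k n2 vk))"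
      by (simp add: P_def mm_assoc)
    also have "\<dots> = P" using Dadv by (simp add: D_def[symmetric] P_def)
    finally show ?thesis .
  qed
  have froP: "fro n2 n2 P \<le> real k"
  proof -
    have "ip n2 n2 P P = ip k n2 (ad k n2 vk) (mm k n2 n2 (ad k n2 vk) P)"
      by (simp add: P_def ip_mm_left[of n2 n2 k vk "ad k n2 vk"])
    also have "mm k n2 n2 (ad k n2 vk) P = ad k n2 vk"
      using Dadv by (simp add: P_def D_def[symmetric] mm_assoc[symmetric])
    finally have "fro n2 n2 P = fro k n2 (ad k n2 vk)" by (simp add: fro_ip')
    also have "\<dots> = (\<Sum>i<k. if i < n2 then 1 else 0)"
    proof (unfold fro_def, rule sum.cong, simp)
      fix i assume i: "i \<in> {..<k}"
      show "(\<Sum>j<n2. (cmod (ad k n2 vk i j))\<^sup>2) = (if i < n2 then 1 else 0)"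
      proof (cases "i < n2")
        case True
        then show ?thesis using col_norm[OF vava True] i by (simp add: ad_def vk_def takec_def)
      next
        case False
        then show ?thesis using cva by (auto simp: ad_def vk_def takec_def cm_def intro!: sum.neutral)
      qed
    qed
    also have "\<dots> \<le> (\<Sum>i<k. 1)" by (intro sum_mono) auto
    finally show ?thesis by simp
  qed
  have E: "mm n2 n2 k (ad n2 n2 va) vk = (\<lambda>i j. if i < n2 \<and> j < k \<and> i = j then 1 else 0)"
  proof (rule cm_eqI[of n2 k])
    fix i j assume ij: "i < n2" "j < k"
    have "mm n2 n2 k (ad n2 n2 va) vk i j = (if j < n2 then mm n2 n2 n2 (ad n2 n2 va) va i j else 0)"
      using ij cva by (auto simp: mm_def ad_def vk_def takec_def cm_def)
    then show "mm n2 n2 k (ad n2 n2 va) vk i j = (if i < n2 \<and> j < k \<and> i = j then 1 else 0)"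
      using ij by (simp add: vava idm_def)
  qed (auto simp: cm_def mm_def)
  have US: "mm n1 k k (takec k ua) (leadm k sa) = mm n1 n2 k a vk"
  proof (rule cm_eqI[of n1 k])
    fix i j assume ij: "i < n1" "j < k"
    have "mm n1 n2 k a vk = mm n1 n2 k (mm n1 n1 n2 ua sa) (mm n2 n2 k (ad n2 n2 va) vk)"
      by (simp add: asvd mm_assoc)
    also have "\<dots> = mm n1 n2 k (mm n1 n1 n2 ua sa) (\<lambda>i j. if i < n2 \<and> j < k \<and> i = j then 1 else 0)"
      by (simp only: E)
    finally have "mm n1 n2 k a vk i j = (\<Sum>x<n2. mm n1 n1 n2 ua sa i x * (if x = j then 1 else 0))"
      using ij by (auto simp: mm_apply intro!: sum.cong)
    also have "\<dots> = (if j < n2 then mm n1 n1 n2 ua sa i j else 0)"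
      by (simp add: sum.delta' mult.commute[of _ "if _ then _ else _"] if_distrib cong: if_cong)
    also have "\<dots> = (if j < n2 then (if j < n1 then ua i j * sa j j else 0) else 0)"
      using ij by (simp add: mm_def diag_col_sum[of sa, OF dsa])
    also have "\<dots> = ua i j * sa j j" using cua csa ij by (auto simp: cm_def)
    also have "\<dots> = (\<Sum>x<k. takec k ua i x * leadm k sa x j)"
      using ij by (simp add: diag_col_sum[of sa, OF dsa] leadm_def takec_def)
    finally show "mm n1 k k (takec k ua) (leadm k sa) i j = mm n1 n2 k a vk i j"
      using ij by (simp add: mm_def)
  qed auto
  have akP: "ak = mm n1 n2 n2 a P"
    by (simp add: ak_def US P_def mm_assoc)
  have rhs1: "fro n1 n2 (msub ak (mm n1 n1 n2 (mm n1 m n1 q (ad m n1 q)) ak))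
      = fro n1 n2 ak - fro m n2 (mm m n2 n2 Cc P)"
  proof -
    have "mm m n2 n2 Cc P = mm m n1 n2 (ad m n1 q) ak" by (simp add: akP Cc_def mm_assoc)
    then show ?thesis using L4[OF qq, of n2 ak] by simp
  qed
  have rhs2: "fro n1 n2 (msub a ak) = fro n1 n2 a - fro n1 n2 ak"
    using L5[OF Pherm Pidem, of n1 a] by (simp add: akP)
  define Y where "Y = mm n2 n2 n2 (ad n2 n2 vc) P"
  define Z where "Z = mm m n2 n2 sc Y"
  define d where "d = (\<lambda>i. \<Sum>j<n2. (cmod (Y i j))\<^sup>2)"
  have "mm m n2 n2 Cc P = mm m m n2 uc Z"
    by (simp add: Cc_def csvd Z_def Y_def mm_assoc)
  then have fCP: "fro m n2 (mm m n2 n2 Cc P) = fro m n2 Z"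
    using L3[OF ucuc, of n2 Z] by (simp add: Z_def)
  have fZ: "fro m n2 Z = (\<Sum>i<min m n2. s i * d i)"
  proof -
    have "fro m n2 Z = (\<Sum>i<m. if i < n2 then s i * d i else 0)"
    proof (unfold fro_def, rule sum.cong, simp)
      fix i assume i: "i \<in> {..<m}"
      have "(\<Sum>j<n2. (cmod (Z i j))\<^sup>2) = (\<Sum>j<n2. if i < n2 then s i * (cmod (Y i j))\<^sup>2 else 0)"
        using i by (intro sum.cong) (auto simp: Z_def mm_def diag_row_sum[of sc, OF dsc] s_def norm_mult power_mult_distrib)
      then show "(\<Sum>j<n2. (cmod (Z i j))\<^sup>2) = (if i < n2 then s i * d i else 0)"
        by (simp add: d_def sum_distrib_left)
    qed
    also have "\<dots> = (\<Sum>i\<in>{i \<in> {..<m}. i < n2}. s i * d i)" by (rule sum.inter_filter[symmetric]) simp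
    also have "{i \<in> {..<m}. i < n2} = {..<min m n2}" by auto
    finally show ?thesis .
  qed
  have d01: "0 \<le> d i \<and> d i \<le> 1" if "i < n2" for i
  proof
    show "0 \<le> d i" by (simp add: d_def sum_nonneg)
    have "d i = fro 1 n2 (mm 1 n2 n2 (rowm i (ad n2 n2 vc)) P)"
      using that by (simp add: d_def fro_def Y_def mm_def rowm_def)
    also have "\<dots> \<le> fro 1 n2 (rowm i (ad n2 n2 vc))" by (rule fro_mono_proj[OF Pherm Pidem])
    also have "\<dots> = 1" using col_norm[OF vcvc that] that by (simp add: fro_def rowm_def ad_def)
    finally show "d i \<le> 1" .
  qed
  have dsum: "(\<Sum>i<min m n2. d i) \<le> real k"
  proof -
    have "(\<Sum>i<min m n2. d i) \<le> (\<Sum>i<n2. d i)"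
      using d01 by (intro sum_mono2) auto
    also have "(\<Sum>i<n2. d i) = fro n2 n2 Y" by (simp add: d_def fro_def)
    also have "\<dots> = fro n2 n2 P" unfolding Y_def
    proof (rule L3)
      show "mm n2 n2 n2 (ad n2 n2 (ad n2 n2 vc)) (ad n2 n2 vc) = idm n2" using cvc vcvc2 by (simp add: ad_ad)
    qed (simp add: P_def)
    finally show ?thesis using froP by simp
  qed
  have smono: "s (Suc i) \<le> s i" if "Suc i < min m n2" for i
  proof -
    have o1: "Im (sc i i) = 0" "0 \<le> Re (sc i i)" "Re (sc (Suc i) (Suc i)) \<le> Re (sc i i)"
      using ord[of i] that by auto
    have o2: "Im (sc (Suc i) (Suc i)) = 0" "0 \<le> Re (sc (Suc i) (Suc i))" using ord[of "Suc i"] that by auto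
    show ?thesis using o1 o2 by (simp add: s_def cmod_power2 power_mono)
  qed
  have kf: "(\<Sum>i<min m n2. s i * d i) \<le> (\<Sum>i<min k (min m n2). s i)"
    by (rule kyfan) (use d01 dsum smono in \<open>auto simp: s_def\<close>)
  have "min k (min m n2) = min k n2" using hk by simp
  then have key: "fro m n2 (mm m n2 n2 Cc P) \<le> (\<Sum>i<min k n2. s i)" using kf fCP fZ by simp
  show ?thesis
    using lhs rhs1 rhs2 key unfolding uk_def[symmetric] uh_def[symmetric] vk_def[symmetric] ak_def[symmetric]
    by linarith
qed



definition wn :: "nat \<Rightarrow> complex" where "wn n = cis (- 2 * pi / real n)"

lemma tdft_w: "tdft n X i j f = (\<Sum>t<n. complex_of_real (X i j t) * wn n ^ (f * t))"
proof -
  have "cis (- 2 * pi * real f * real t / real n) = wn n ^ (f * t)" for t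
  proof -
    have "- 2 * pi * real f * real t / real n = real (f * t) * (- 2 * pi / real n)"
      by (simp add: mult_ac)
    then show ?thesis by (simp only: wn_def DeMoivre)
  qed
  then show ?thesis by (simp add: tdft_def)
qed

lemma wn_n: "0 < n \<Longrightarrow> wn n ^ n = 1"
proof -
  assume n: "0 < n"
  have "wn n ^ n = cis (real n * (- 2 * pi / real n))" by (simp only: wn_def DeMoivre)
  also have "real n * (- 2 * pi / real n) = 2 * pi * real_of_int (-1)" using n by simp
  also have "cis (2 * pi * real_of_int (-1)) = 1" by (rule cis_multiple_2pi) simp
  finally show ?thesis .
qed

lemma wn_mod: assumes "0 < n" shows "wn n ^ a = wn n ^ (a mod n)"
proof -
  have "wn n ^ a = (wn n ^ n) ^ (a div n) * wn n ^ (a mod n)"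
    by (metis div_mult_mod_eq power_add power_mult mult.commute)
  then show ?thesis using wn_n[OF assms] by simp
qed

lemma wn_eq: "0 < n \<Longrightarrow> a mod n = b mod n \<Longrightarrow> wn n ^ a = wn n ^ b"
  by (metis wn_mod)

lemma norm_wn[simp]: "norm (wn n ^ a) = 1" by (simp add: wn_def norm_power)

lemma cnj_mult_self: "norm z = 1 \<Longrightarrow> cnj z * z = 1"
  by (metis complex_norm_square mult.commute of_real_1 power_one)

lemma wn_cnj: assumes "0 < n" "(a + b) mod n = 0" shows "wn n ^ b = cnj (wn n ^ a)"
proof -
  have "wn n ^ a * wn n ^ b = 1" using wn_mod[OF assms(1), of "a + b"] assms(2) by (simp add: power_add)
  moreover have "cnj (wn n ^ a) * wn n ^ a = 1" by (rule cnj_mult_self) simp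
  ultimately show ?thesis by (metis mult.assoc mult.commute mult_1_right)
qed

lemma wn_ne1: assumes "0 < d" "d < n" shows "wn n ^ d \<noteq> 1"
proof
  assume "wn n ^ d = 1"
  then have "cis (real d * (- 2 * pi / real n)) = 1" by (simp add: wn_def DeMoivre)
  then have "cos (real d * (- 2 * pi / real n)) = 1" by (metis cis.sel(1) one_complex.sel(1))
  then obtain m :: int where m: "real d * (- 2 * pi / real n) = real_of_int m * 2 * pi" using cos_one_2pi_int by blast
  have "real n > 0" using assms by simp
  then have "pi * (- real d) = pi * (real_of_int m * real n)" using m by (simp add: field_simps)
  then have "- real d = real_of_int m * real n" by (rule mult_left_cancel[OF pi_neq_zero, THEN iffD1])
  then have "- int d = m * int n" by (metis of_int_eq_iff of_int_minus of_int_mult of_int_of_nat_eq)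
  then show False
  proof (cases "m \<ge> 0")
    case True
    then have "m * int n \<ge> 0" by simp
    then show False using \<open>- int d = m * int n\<close> assms by linarith
  next
    case False
    then have "m * int n \<le> - int n" using mult_right_mono[of m "-1" "int n"] False by simp
    then show False using \<open>- int d = m * int n\<close> assms by linarith
  qed
qed

lemma rot_sum: fixes g :: "nat \<Rightarrow> 'a::comm_monoid_add" and n t :: nat assumes "t < n" shows "(\<Sum>k<n. g ((k + n - t) mod n)) = (\<Sum>k<n. g k)"
proof (rule sum.reindex_bij_witness[where i = "\<lambda>j. (j + t) mod n" and j = "\<lambda>k. (k + n - t) mod n"])
  fix k assume k: "k \<in> {..<n}"
  have "((k + n - t) mod n + t) mod n = (k + n - t + t) mod n" by (rule mod_add_left_eq)
  also have "\<dots> = k" using k assms by simp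
  finally show "((k + n - t) mod n + t) mod n = k" .
  show "(k + n - t) mod n \<in> {..<n}" using assms by simp
next
  fix j assume j: "j \<in> {..<n}"
  have "((j + t) mod n + n - t) mod n = ((j + t) mod n + (n - t)) mod n" using assms by simp
  also have "\<dots> = (j + t + (n - t)) mod n" by (rule mod_add_left_eq)
  also have "\<dots> = j" using j assms by simp
  finally show "((j + t) mod n + n - t) mod n = j" .
  show "(j + t) mod n \<in> {..<n}" using assms by simp
qed simp

lemma neg_sum: fixes g :: "nat \<Rightarrow> 'a::comm_monoid_add" and n :: nat shows "(\<Sum>k<n. g ((n - k) mod n)) = (\<Sum>k<n. g k)"
proof (rule sum.reindex_bij_witness[where i = "\<lambda>j. (n - j) mod n" and j = "\<lambda>k. (n - k) mod n"])
  fix k assume k: "k \<in> {..<n}"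
  then show "(n - (n - k) mod n) mod n = k"
    by (cases "k = 0") auto
  show "(n - k) mod n \<in> {..<n}" using k by simp
next
  fix k assume k: "k \<in> {..<n}"
  then show "(n - (n - k) mod n) mod n = k"
    by (cases "k = 0") auto
  show "(n - k) mod n \<in> {..<n}" using k by simp
qed simp



definition dft :: "nat \<Rightarrow> tensor \<Rightarrow> nat \<Rightarrow> cmat" where
  "dft n X f = (\<lambda>i j. tdft n X i j f)"

lemma tdft_zero: "(\<And>t. X i j t = 0) \<Longrightarrow> tdft n X i j f = 0"
  by (simp add: tdft_def)

lemma mod_fact1: fixes f k n t :: nat assumes "t < n" shows "(f * ((k + n - t) mod n) + f * t) mod n = (f * k) mod n"
proof -
  have "(f * ((k + n - t) mod n) + f * t) mod n = ((f * ((k + n - t) mod n)) mod n + f * t) mod n"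
    by (rule mod_add_left_eq[symmetric])
  also have "(f * ((k + n - t) mod n)) mod n = (f * (k + n - t)) mod n" by (rule mod_mult_right_eq)
  also have "((f * (k + n - t)) mod n + f * t) mod n = (f * (k + n - t) + f * t) mod n" by (rule mod_add_left_eq)
  also have "f * (k + n - t) + f * t = f * k + f * n"
  proof -
    have "k + n - t + t = k + n" using assms by simp
    then have "f * (k + n - t + t) = f * (k + n)" by simp
    then show ?thesis by (simp only: distrib_left)
  qed
  also have "(f * k + f * n) mod n = (f * k) mod n" by simp
  finally show ?thesis .
qed

lemma mod_fact2: fixes f k n :: nat assumes "k < n" shows "(f * ((n - k) mod n) + f * k) mod n = 0"
proof -
  have "(f * ((n - k) mod n) + f * k) mod n = ((f * ((n - k) mod n)) mod n + f * k) mod n"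
    by (rule mod_add_left_eq[symmetric])
  also have "(f * ((n - k) mod n)) mod n = (f * (n - k)) mod n" by (rule mod_mult_right_eq)
  also have "((f * (n - k)) mod n + f * k) mod n = (f * (n - k) + f * k) mod n" by (rule mod_add_left_eq)
  also have "f * (n - k) + f * k = f * n"
  proof -
    have "n - k + k = n" using assms by simp
    then have "f * (n - k + k) = f * n" by simp
    then show ?thesis by (simp only: distrib_left)
  qed
  finally show ?thesis by simp
qed

lemma dft_tprod: assumes n: "0 < n"
  shows "dft n (tprod n1 n2 n l X Y) f = mm n1 n2 l (dft n X f) (dft n Y f)"
proof (rule ext, rule ext)
  fix i j
  show "dft n (tprod n1 n2 n l X Y) f i j = mm n1 n2 l (dft n X f) (dft n Y f) i j"
  proof (cases "i < n1 \<and> j < l")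
    case False then show ?thesis by (auto simp: dft_def mm_def tdft_def tprod_def)
  next
    case True
    let ?w = "wn n"
    have inner: "(\<Sum>k<n. complex_of_real (X i p ((k + n - t) mod n)) * ?w ^ (f * k))
        = tdft n X i p f * ?w ^ (f * t)" if t: "t < n" for p t
    proof -
      have "(\<Sum>k<n. complex_of_real (X i p ((k + n - t) mod n)) * ?w ^ (f * k))
          = (\<Sum>k<n. complex_of_real (X i p ((k + n - t) mod n)) * ?w ^ (f * ((k + n - t) mod n))) * ?w ^ (f * t)"
        unfolding sum_distrib_right
      proof (rule sum.cong, simp)
        fix k
        have "?w ^ (f * k) = ?w ^ (f * ((k + n - t) mod n) + f * t)"
          by (rule wn_eq[OF n]) (simp add: mod_fact1[OF t])
        then show "complex_of_real (X i p ((k + n - t) mod n)) * ?w ^ (f * k)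
          = complex_of_real (X i p ((k + n - t) mod n)) * ?w ^ (f * ((k + n - t) mod n)) * ?w ^ (f * t)"
          by (simp add: power_add mult.assoc)
      qed
      also have "(\<Sum>k<n. complex_of_real (X i p ((k + n - t) mod n)) * ?w ^ (f * ((k + n - t) mod n)))
          = tdft n X i p f"
        using rot_sum[OF t, of "\<lambda>x. complex_of_real (X i p x) * ?w ^ (f * x)"] by (simp add: tdft_w)
      finally show ?thesis .
    qed
    have "dft n (tprod n1 n2 n l X Y) f i j
        = (\<Sum>k<n. (\<Sum>p<n2. \<Sum>t<n. complex_of_real (X i p ((k + n - t) mod n)) * complex_of_real (Y p j t)) * ?w ^ (f * k))"
      using True by (simp add: dft_def tdft_w tprod_def)
    also have "\<dots> = (\<Sum>p<n2. \<Sum>t<n. complex_of_real (Y p j t) * (\<Sum>k<n. complex_of_real (X i p ((k + n - t) mod n)) * ?w ^ (f * k)))"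
    proof -
      have "(\<Sum>k<n. (\<Sum>p<n2. \<Sum>t<n. complex_of_real (X i p ((k + n - t) mod n)) * complex_of_real (Y p j t)) * ?w ^ (f * k))
          = (\<Sum>k<n. \<Sum>p<n2. \<Sum>t<n. complex_of_real (Y p j t) * (complex_of_real (X i p ((k + n - t) mod n)) * ?w ^ (f * k)))"
        unfolding sum_distrib_right by (intro sum.cong refl) (simp only: mult_ac)
      also have "\<dots> = (\<Sum>p<n2. \<Sum>k<n. \<Sum>t<n. complex_of_real (Y p j t) * (complex_of_real (X i p ((k + n - t) mod n)) * ?w ^ (f * k)))"
        by (rule sum.swap)
      also have "\<dots> = (\<Sum>p<n2. \<Sum>t<n. \<Sum>k<n. complex_of_real (Y p j t) * (complex_of_real (X i p ((k + n - t) mod n)) * ?w ^ (f * k)))"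
        by (rule sum.cong, simp, rule sum.swap)
      finally show ?thesis by (simp add: sum_distrib_left)
    qed
    also have "\<dots> = (\<Sum>p<n2. \<Sum>t<n. complex_of_real (Y p j t) * (tdft n X i p f * ?w ^ (f * t)))"
      by (intro sum.cong refl) (simp add: inner)
    also have "\<dots> = (\<Sum>p<n2. tdft n X i p f * (\<Sum>t<n. complex_of_real (Y p j t) * ?w ^ (f * t)))"
      by (intro sum.cong refl) (simp only: sum_distrib_left mult_ac)
    also have "\<dots> = (\<Sum>p<n2. tdft n X i p f * tdft n Y p j f)"
      by (simp only: tdft_w[of n Y])
    also have "\<dots> = mm n1 n2 l (dft n X f) (dft n Y f) i j" using True by (simp add: mm_def dft_def)
    finally show ?thesis .
  qed
qed

lemma dft_ttrans: assumes n: "0 < n"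
  shows "dft n (ttrans n1 n2 n X) f = ad n2 n1 (dft n X f)"
proof (rule ext, rule ext)
  fix i j
  show "dft n (ttrans n1 n2 n X) f i j = ad n2 n1 (dft n X f) i j"
  proof (cases "i < n2 \<and> j < n1")
    case False then show ?thesis by (auto simp: dft_def ad_def tdft_def ttrans_def)
  next
    case True
    let ?w = "wn n"
    have "dft n (ttrans n1 n2 n X) f i j = (\<Sum>k<n. complex_of_real (X j i ((n - k) mod n)) * ?w ^ (f * k))"
      using True by (simp add: dft_def tdft_w ttrans_def)
    also have "\<dots> = (\<Sum>k<n. complex_of_real (X j i ((n - k) mod n)) * cnj (?w ^ (f * ((n - k) mod n))))"
    proof (rule sum.cong[OF refl])
      fix k assume "k \<in> {..<n}"
      then have "?w ^ (f * k) = cnj (?w ^ (f * ((n - k) mod n)))" by (intro wn_cnj[OF n mod_fact2]) simp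
      then show "complex_of_real (X j i ((n - k) mod n)) * ?w ^ (f * k) = complex_of_real (X j i ((n - k) mod n)) * cnj (?w ^ (f * ((n - k) mod n)))"
        by simp
    qed
    also have "\<dots> = (\<Sum>k<n. complex_of_real (X j i k) * cnj (?w ^ (f * k)))"
      by (rule neg_sum[of "\<lambda>x. complex_of_real (X j i x) * cnj (?w ^ (f * x))"])
    also have "\<dots> = ad n2 n1 (dft n X f) i j" using True by (simp add: ad_def dft_def tdft_w)
    finally show ?thesis .
  qed
qed

lemma dft_tid: assumes n: "0 < n" shows "dft n (tid m n) f = idm m"
proof (rule ext, rule ext)
  fix i j
  have "dft n (tid m n) f i j = (\<Sum>t<n. complex_of_real (tid m n i j t) * wn n ^ (f * t))"
    by (simp add: dft_def tdft_w)
  also have "\<dots> = (\<Sum>t<n. if t = 0 then (if i < m \<and> j < m \<and> i = j then 1 else 0) else 0)"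
    by (rule sum.cong) (auto simp: tid_def n)
  also have "\<dots> = idm m i j" using n by (simp add: idm_def)
  finally show "dft n (tid m n) f i j = idm m i j" .
qed

lemma dft_tminus: "dft n (tminus X Y) f = msub (dft n X f) (dft n Y f)"
  by (simp add: dft_def msub_def tminus_def tdft_def fun_eq_iff sum_subtractf algebra_simps)

lemma dft_tlat_take: "dft n (tlat_take k X) f = takec k (dft n X f)"
  unfolding dft_def takec_def tlat_take_def tdft_def by (rule ext)+ auto

lemma dft_tlead: "dft n (tlead k X) f = leadm k (dft n X f)"
  unfolding dft_def leadm_def tlead_def tdft_def by (rule ext)+ auto

lemma dft_cm: "is_tensor n1 n2 n X \<Longrightarrow> cm n1 n2 (dft n X f)"
  by (auto simp: is_tensor_def cm_def dft_def tdft_def)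

lemma dft_diag: "f_diagonal S \<Longrightarrow> i \<noteq> j \<Longrightarrow> dft n S f i j = 0"
  by (simp add: f_diagonal_def dft_def tdft_def)



lemma geo_root: fixes z :: complex assumes "z ^ n = 1" "z \<noteq> 1" shows "(\<Sum>f<n. z ^ f) = 0"
  using geometric_sum[OF assms(2), of n] assms(1) by simp

lemma wpow_n: "0 < n \<Longrightarrow> (wn n ^ t) ^ n = 1"
  by (metis power_mult mult.commute power_one wn_n)

lemma ortho: assumes n: "0 < n" and t: "t < n" and s: "s < n"
  shows "(\<Sum>f<n. cnj (wn n ^ (f * t)) * wn n ^ (f * s)) = (if t = s then of_nat n else 0)"
proof -
  let ?w = "wn n"
  define z where "z = cnj (?w ^ t) * ?w ^ s"
  have zf: "cnj (?w ^ (f * t)) * ?w ^ (f * s) = z ^ f" for f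
    by (simp add: z_def power_mult_distrib power_mult mult.commute[of f])
  show ?thesis
  proof (cases "t = s")
    case True
    then have "z = 1" using cnj_mult_self[of "?w ^ s"] by (simp add: z_def)
    then show ?thesis unfolding zf using True by simp
  next
    case False
    have zn: "z ^ n = 1"
    proof -
      have "z ^ n = cnj ((?w ^ t) ^ n) * (?w ^ s) ^ n" by (simp add: z_def power_mult_distrib)
      then show ?thesis using wpow_n[OF n] by simp
    qed
    have z1: "z \<noteq> 1"
    proof
      assume "z = 1"
      then have "?w ^ t * z = ?w ^ t" by simp
      moreover have "?w ^ t * z = ?w ^ s"
      proof -
        have "?w ^ t * z = (cnj (?w ^ t) * ?w ^ t) * ?w ^ s" by (simp only: z_def mult_ac)
        also have "cnj (?w ^ t) * ?w ^ t = 1" by (rule cnj_mult_self) simp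
        finally show ?thesis by simp
      qed
      ultimately have ts: "?w ^ s = ?w ^ t" by simp
      have nz: "?w ^ a \<noteq> 0" for a by (simp add: wn_def)
      show False
      proof (cases "t < s")
        case True
        then have "?w ^ s = ?w ^ t * ?w ^ (s - t)" by (simp add: power_add[symmetric])
        then have "?w ^ (s - t) = 1" using ts nz[of t] nz[of 1] by simp
        then show False using wn_ne1[of "s - t" n] True s by simp
      next
        case False
        then have "s < t" using \<open>t \<noteq> s\<close> by simp
        then have "?w ^ t = ?w ^ s * ?w ^ (t - s)" by (simp add: power_add[symmetric])
        then have "?w ^ (t - s) = 1" using ts nz[of s] nz[of 1] by simp
        then show False using wn_ne1[of "t - s" n] \<open>s < t\<close> t by simp
      qed
    qed
    show ?thesis unfolding zf using False geo_root[OF zn z1] by simp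
  qed
qed

lemma tube_parseval: fixes x :: "nat \<Rightarrow> real" assumes n: "0 < n"
  shows "(\<Sum>f<n. (cmod (\<Sum>t<n. complex_of_real (x t) * wn n ^ (f * t)))\<^sup>2) = real n * (\<Sum>t<n. (x t)\<^sup>2)"
proof -
  let ?w = "wn n"
  have "complex_of_real (\<Sum>f<n. (cmod (\<Sum>t<n. complex_of_real (x t) * ?w ^ (f * t)))\<^sup>2)
      = (\<Sum>f<n. cnj (\<Sum>t<n. complex_of_real (x t) * ?w ^ (f * t)) * (\<Sum>s<n. complex_of_real (x s) * ?w ^ (f * s)))"
    by (simp only: of_real_sum cmod_sq_cnj)
  also have "\<dots> = (\<Sum>f<n. \<Sum>t<n. \<Sum>s<n. complex_of_real (x t * x s) * (cnj (?w ^ (f * t)) * ?w ^ (f * s)))"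
    by (simp add: sum_distrib_left sum_distrib_right mult_ac)
  also have "\<dots> = (\<Sum>t<n. \<Sum>s<n. \<Sum>f<n. complex_of_real (x t * x s) * (cnj (?w ^ (f * t)) * ?w ^ (f * s)))"
  proof -
    have "(\<Sum>f<n. \<Sum>t<n. \<Sum>s<n. complex_of_real (x t * x s) * (cnj (?w ^ (f * t)) * ?w ^ (f * s)))
        = (\<Sum>t<n. \<Sum>f<n. \<Sum>s<n. complex_of_real (x t * x s) * (cnj (?w ^ (f * t)) * ?w ^ (f * s)))"
      by (rule sum.swap)
    also have "\<dots> = (\<Sum>t<n. \<Sum>s<n. \<Sum>f<n. complex_of_real (x t * x s) * (cnj (?w ^ (f * t)) * ?w ^ (f * s)))"
      by (rule sum.cong, simp, rule sum.swap)
    finally show ?thesis .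
  qed
  also have "\<dots> = (\<Sum>t<n. \<Sum>s<n. complex_of_real (x t * x s) * (if t = s then of_nat n else 0))"
  proof (intro sum.cong refl)
    fix t s assume t: "t \<in> {..<n}" and s: "s \<in> {..<n}"
    have "(\<Sum>f<n. complex_of_real (x t * x s) * (cnj (?w ^ (f * t)) * ?w ^ (f * s)))
        = complex_of_real (x t * x s) * (\<Sum>f<n. cnj (?w ^ (f * t)) * ?w ^ (f * s))"
      by (simp only: sum_distrib_left)
    also have "(\<Sum>f<n. cnj (?w ^ (f * t)) * ?w ^ (f * s)) = (if t = s then of_nat n else 0)"
      using t s by (intro ortho[OF n]) auto
    finally show "(\<Sum>f<n. complex_of_real (x t * x s) * (cnj (?w ^ (f * t)) * ?w ^ (f * s)))
        = complex_of_real (x t * x s) * (if t = s then of_nat n else 0)" .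
  qed
  also have "\<dots> = (\<Sum>t<n. complex_of_real (x t * x t) * of_nat n)"
    by (intro sum.cong refl) (simp add: if_distrib sum.delta' cong: if_cong)
  also have "\<dots> = complex_of_real (real n * (\<Sum>t<n. (x t)\<^sup>2))"
    by (simp add: of_real_sum sum_distrib_left power2_eq_square mult_ac)
  finally show ?thesis by (simp only: of_real_eq_iff)
qed

lemma parseval: assumes n: "0 < n"
  shows "(tfro n1 n2 n X)\<^sup>2 = (\<Sum>f<n. fro n1 n2 (dft n X f)) / real n"
proof -
  have "(tfro n1 n2 n X)\<^sup>2 = (\<Sum>i<n1. \<Sum>j<n2. \<Sum>k<n. (X i j k)\<^sup>2)"
    by (simp add: tfro_def sum_nonneg)
  moreover have "(\<Sum>f<n. fro n1 n2 (dft n X f)) = real n * (\<Sum>i<n1. \<Sum>j<n2. \<Sum>k<n. (X i j k)\<^sup>2)"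
  proof -
    have "(\<Sum>f<n. fro n1 n2 (dft n X f)) = (\<Sum>f<n. \<Sum>i<n1. \<Sum>j<n2. (cmod (tdft n X i j f))\<^sup>2)"
      by (simp add: fro_def dft_def)
    also have "\<dots> = (\<Sum>i<n1. \<Sum>j<n2. \<Sum>f<n. (cmod (tdft n X i j f))\<^sup>2)"
    proof -
      have "(\<Sum>f<n. \<Sum>i<n1. \<Sum>j<n2. (cmod (tdft n X i j f))\<^sup>2) = (\<Sum>i<n1. \<Sum>f<n. \<Sum>j<n2. (cmod (tdft n X i j f))\<^sup>2)"
        by (rule sum.swap)
      also have "\<dots> = (\<Sum>i<n1. \<Sum>j<n2. \<Sum>f<n. (cmod (tdft n X i j f))\<^sup>2)"
        by (rule sum.cong, simp, rule sum.swap)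
      finally show ?thesis .
    qed
    also have "\<dots> = (\<Sum>i<n1. \<Sum>j<n2. real n * (\<Sum>k<n. (X i j k)\<^sup>2))"
      by (intro sum.cong refl) (simp add: tdft_w tube_parseval[OF n])
    finally show ?thesis by (simp add: sum_distrib_left)
  qed
  ultimately show ?thesis using n by simp
qed



lemma orth_dft: assumes n: "0 < n3" and "tprod a b n3 a X Y = tid a n3"
  shows "mm a b a (dft n3 X f) (dft n3 Y f) = idm a"
proof -
  have "dft n3 (tprod a b n3 a X Y) f = dft n3 (tid a n3) f" using assms(2) by simp
  then show ?thesis by (simp add: dft_tprod[OF n] dft_tid[OF n])
qed

theorem theorem3:
  fixes n1 n2 n3 s m q k :: nat and A B Q UA SA VA UC SC VC :: tensor
  assumes hA: "is_tensor n1 n2 n3 A"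
    and hB: "is_tensor n2 s n3 B"
    and hQ: "is_tqr_factor n1 (Suc q * s) n3 m (krylov n1 n2 n3 s q A B) Q"
    and hsvdA: "is_tsvd n1 n2 n3 A UA SA VA"
    and hsvdC: "is_tsvd m n2 n3 (tprod m n1 n3 n2 (ttrans n1 m n3 Q) A) UC SC VC"
    and hk: "k \<le> m"
  shows "(let Uh = tprod n1 m n3 m Q UC;
              Uk = tlat_take k Uh;
              Ak = ttrunc n1 n2 n3 k UA SA VA
          in (tfro n1 n2 n3
                (tminus A (tprod n1 n1 n3 n2 (tprod n1 k n3 n1 Uk (ttrans n1 k n3 Uk)) A)))\<^sup>2
             \<le> (tfro n1 n2 n3
                  (tminus Ak (tprod n1 n1 n3 n2 (tprod n1 m n3 n1 Q (ttrans n1 m n3 Q)) Ak)))\<^sup>2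
               + (tfro n1 n2 n3 (tminus A Ak))\<^sup>2)"
proof (cases "n3 = 0")
  case True
  then show ?thesis by (simp add: Let_def tfro_def)
next
  case False
  then have n: "0 < n3" by simp
  define Uk where "Uk = tlat_take k (tprod n1 m n3 m Q UC)"
  define Ak where "Ak = ttrunc n1 n2 n3 k UA SA VA"
  define L where "L = tminus A (tprod n1 n1 n3 n2 (tprod n1 k n3 n1 Uk (ttrans n1 k n3 Uk)) A)"
  define R1 where "R1 = tminus Ak (tprod n1 n1 n3 n2 (tprod n1 m n3 n1 Q (ttrans n1 m n3 Q)) Ak)"
  define R2 where "R2 = tminus A Ak"
  have Qt: "is_tensor n1 m n3 Q" and QQ: "tprod m n1 n3 m (ttrans n1 m n3 Q) Q = tid m n3"
    using hQ by (auto simp: is_tqr_factor_def)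
  note A = hsvdA[unfolded is_tsvd_def orthogonal_tensor_def]
  note C = hsvdC[unfolded is_tsvd_def orthogonal_tensor_def]
  have per: "fro n1 n2 (dft n3 L f) \<le> fro n1 n2 (dft n3 R1 f) + fro n1 n2 (dft n3 R2 f)" if fn: "f < n3" for f
  proof -
    have "fro n1 n2 (msub (dft n3 A f) (mm n1 n1 n2 (mm n1 k n1 (takec k (mm n1 m m (dft n3 Q f) (dft n3 UC f)))
            (ad k n1 (takec k (mm n1 m m (dft n3 Q f) (dft n3 UC f))))) (dft n3 A f)))
     \<le> fro n1 n2 (msub (mm n1 k n2 (mm n1 k k (takec k (dft n3 UA f)) (leadm k (dft n3 SA f))) (ad k n2 (takec k (dft n3 VA f))))
            (mm n1 n1 n2 (mm n1 m n1 (dft n3 Q f) (ad m n1 (dft n3 Q f)))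
               (mm n1 k n2 (mm n1 k k (takec k (dft n3 UA f)) (leadm k (dft n3 SA f))) (ad k n2 (takec k (dft n3 VA f))))))
       + fro n1 n2 (msub (dft n3 A f) (mm n1 k n2 (mm n1 k k (takec k (dft n3 UA f)) (leadm k (dft n3 SA f))) (ad k n2 (takec k (dft n3 VA f)))))"
    proof (rule matrix_main)
      show "cm n1 n2 (dft n3 A f)" using hA by (rule dft_cm)
      show "cm n1 m (dft n3 Q f)" using Qt by (rule dft_cm)
      show "mm m n1 m (ad m n1 (dft n3 Q f)) (dft n3 Q f) = idm m"
        using orth_dft[OF n QQ, of f] by (simp add: dft_ttrans[OF n])
      show "cm n1 n1 (dft n3 UA f)" "cm n1 n2 (dft n3 SA f)" "cm n2 n2 (dft n3 VA f)"
        using A by (auto intro: dft_cm)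
      show "mm n2 n2 n2 (ad n2 n2 (dft n3 VA f)) (dft n3 VA f) = idm n2"
        using orth_dft[OF n, of n2 n2 "ttrans n2 n2 n3 VA" VA f] A by (simp add: dft_ttrans[OF n])
      show "\<And>i j. i \<noteq> j \<Longrightarrow> dft n3 SA f i j = 0" using A by (auto intro: dft_diag)
      have "dft n3 A f = dft n3 (tprod n1 n2 n3 n2 (tprod n1 n1 n3 n2 UA SA) (ttrans n2 n2 n3 VA)) f"
        using A by metis
      then show "dft n3 A f = mm n1 n2 n2 (mm n1 n1 n2 (dft n3 UA f) (dft n3 SA f)) (ad n2 n2 (dft n3 VA f))"
        by (simp add: dft_tprod[OF n] dft_ttrans[OF n])
      show "cm m m (dft n3 UC f)" "cm m n2 (dft n3 SC f)" "cm n2 n2 (dft n3 VC f)"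
        using C by (auto intro: dft_cm)
      show "mm m m m (ad m m (dft n3 UC f)) (dft n3 UC f) = idm m"
        using orth_dft[OF n, of m m "ttrans m m n3 UC" UC f] C by (simp add: dft_ttrans[OF n])
      show "mm n2 n2 n2 (ad n2 n2 (dft n3 VC f)) (dft n3 VC f) = idm n2"
        using orth_dft[OF n, of n2 n2 "ttrans n2 n2 n3 VC" VC f] C by (simp add: dft_ttrans[OF n])
      show "mm n2 n2 n2 (dft n3 VC f) (ad n2 n2 (dft n3 VC f)) = idm n2"
        using orth_dft[OF n, of n2 n2 VC "ttrans n2 n2 n3 VC" f] C by (simp add: dft_ttrans[OF n])
      show "\<And>i j. i \<noteq> j \<Longrightarrow> dft n3 SC f i j = 0" using C by (auto intro: dft_diag)
      have "dft n3 (tprod m n1 n3 n2 (ttrans n1 m n3 Q) A) f = dft n3 (tprod m n2 n3 n2 (tprod m m n3 n2 UC SC) (ttrans n2 n2 n3 VC)) f"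
        using C by metis
      then show "mm m n1 n2 (ad m n1 (dft n3 Q f)) (dft n3 A f) = mm m n2 n2 (mm m m n2 (dft n3 UC f) (dft n3 SC f)) (ad n2 n2 (dft n3 VC f))"
        by (simp add: dft_tprod[OF n] dft_ttrans[OF n])
      show "k \<le> m" by (rule hk)
      fix i assume i: "i < min m n2"
      show "Im (dft n3 SC f i i) = 0 \<and> 0 \<le> Re (dft n3 SC f i i) \<and>
             (Suc i < min m n2 \<longrightarrow> Re (dft n3 SC f (Suc i) (Suc i)) \<le> Re (dft n3 SC f i i))"
        using C i fn by (simp add: dft_def)
    qed
    then show ?thesis
      by (simp add: L_def R1_def R2_def Uk_def Ak_def ttrunc_def dft_tprod[OF n] dft_ttrans[OF n]
          dft_tminus dft_tlat_take dft_tlead)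
  qed
  have "(tfro n1 n2 n3 L)\<^sup>2 \<le> (tfro n1 n2 n3 R1)\<^sup>2 + (tfro n1 n2 n3 R2)\<^sup>2"
  proof -
    have "(\<Sum>f<n3. fro n1 n2 (dft n3 L f)) \<le> (\<Sum>f<n3. fro n1 n2 (dft n3 R1 f)) + (\<Sum>f<n3. fro n1 n2 (dft n3 R2 f))"
      unfolding sum.distrib[symmetric] by (rule sum_mono) (simp add: per)
    then show ?thesis using n by (simp add: parseval[OF n] add_divide_distrib[symmetric] divide_right_mono)
  qed
  then show ?thesis by (simp add: Let_def L_def R1_def R2_def Uk_def Ak_def)
qed


end
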